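(* Let $\mathcal{A}=\{1,\dots,K\}$, let $a^*\in\mathcal{A}$, $T\ge1$, $\sigma>0$, and for each $a\in\mathcal{A}$ let $m_a\ge1$ be an integer and $\vec{y}_a\in\mathbb{R}^{m_a}$. For perturbations $\vec{\epsilon}_a\in\mathbb{R}^{m_a}$ put $\tilde{\mu}_a=(\vec{y}_a+\vec{\epsilon}_a)^T\mathbf{1}/m_a$ and $$u_a(T+1)=\tilde{\mu}_a+3\sigma\sqrt{\frac{\log(T+1)}{m_a}}.$$ Fix a margin $\xi>0$ and consider $$P_2:\quad \min_{\{\vec{\epsilon}_a\}_{a\in\mathcal{A}}}\ \sum_{a\in\mathcal{A}}\|\vec{\epsilon}_a\|_2^2\quad\text{s.t.}\quad u_{a^*}(T+1)\geq u_a(T+1)+\xi\ \ \forall a\neq a^*.$$ Then $P_2$ is a quadratic program with linear constraints and, for every reward instance $\{\vec{y}_a\}_{a\in\mathcal{A}}$, it has at least one optimal solution. In particular, after poisoning with such a solution, the UCB algorithm pulls $a^*$ at round $T+1$.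
   Context: Offline attack setting: a bandit algorithm pulls arms $a_1,\dots,a_T$, receiving rewards $r_t=\mu_{a_t}+\eta_t$ with zero-mean $\sigma$-subGaussian noise; $m_a$ is the number of rounds $t\le T$ with $a_t=a$, $\vec{y}_a=(r_t:a_t=a)^T$, and an attacker replaces arm $a$'s rewards by $\vec{y}_a+\vec{\epsilon}_a$ before the algorithm updates. $\mathbf{1}$ is the all-ones vector. The UCB algorithm at round $t$ pulls $\arg\max_a \tilde{\mu}_a(t-1)+3\sigma\sqrt{\log t/N_a(t-1)}$, where $\tilde{\mu}_a(t-1)$ is the (poisoned) empirical mean and $N_a(t-1)$ the number of pulls of arm $a$ up to round $t-1$. *)

theory Defs
  imports Complex_Main
begin

text \<open>Arms are 1..K. Arm a has m a observed rewards y a i (i < m a);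
 a perturbation eps assigns eps a i to the i-th reward of arm a (only i < m a matters).\<close>

definition poisoned_mean :: "(nat \<Rightarrow> nat) \<Rightarrow> (nat \<Rightarrow> nat \<Rightarrow> real) \<Rightarrow> (nat \<Rightarrow> nat \<Rightarrow> real) \<Rightarrow> nat \<Rightarrow> real" where
  "poisoned_mean m y eps a = (\<Sum>i<m a. y a i + eps a i) / real (m a)"

definition ucb_index :: "real \<Rightarrow> nat \<Rightarrow> (nat \<Rightarrow> nat) \<Rightarrow> (nat \<Rightarrow> nat \<Rightarrow> real) \<Rightarrow> (nat \<Rightarrow> nat \<Rightarrow> real) \<Rightarrow> nat \<Rightarrow> real" where
  "ucb_index \<sigma> T m y eps a =
     poisoned_mean m y eps a + 3 * \<sigma> * sqrt (ln (real T + 1) / real (m a))"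

definition attack_cost :: "nat \<Rightarrow> (nat \<Rightarrow> nat) \<Rightarrow> (nat \<Rightarrow> nat \<Rightarrow> real) \<Rightarrow> real" where
  "attack_cost K m eps = (\<Sum>a\<in>{1..K}. \<Sum>i<m a. (eps a i)\<^sup>2)"

definition P2_feasible :: "nat \<Rightarrow> nat \<Rightarrow> real \<Rightarrow> nat \<Rightarrow> real \<Rightarrow> (nat \<Rightarrow> nat) \<Rightarrow> (nat \<Rightarrow> nat \<Rightarrow> real) \<Rightarrow> (nat \<Rightarrow> nat \<Rightarrow> real) \<Rightarrow> bool" where
  "P2_feasible K astar \<sigma> T \<xi> m y eps \<longleftrightarrow>
     (\<forall>a\<in>{1..K}. a \<noteq> astar \<longrightarrow> ucb_index \<sigma> T m y eps astar \<ge> ucb_index \<sigma> T m y eps a + \<xi>)"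

definition P2_optimal :: "nat \<Rightarrow> nat \<Rightarrow> real \<Rightarrow> nat \<Rightarrow> real \<Rightarrow> (nat \<Rightarrow> nat) \<Rightarrow> (nat \<Rightarrow> nat \<Rightarrow> real) \<Rightarrow> (nat \<Rightarrow> nat \<Rightarrow> real) \<Rightarrow> bool" where
  "P2_optimal K astar \<sigma> T \<xi> m y eps \<longleftrightarrow>
     P2_feasible K astar \<sigma> T \<xi> m y eps \<and>
     (\<forall>eps'. P2_feasible K astar \<sigma> T \<xi> m y eps' \<longrightarrow> attack_cost K m eps \<le> attack_cost K m eps')"

text \<open>UCB at round T+1 pulls arm a iff a is an argmax of the indices (tie-breaking
 arbitrary); we state that a* is the unique maximiser, so it is pulled under any tie rule.\<close>
definition ucb_pulls :: "nat \<Rightarrow> real \<Rightarrow> nat \<Rightarrow> (nat \<Rightarrow> nat) \<Rightarrow> (nat \<Rightarrow> nat \<Rightarrow> real) \<Rightarrow> (nat \<Rightarrow> nat \<Rightarrow> real) \<Rightarrow> nat \<Rightarrow> bool" where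
  "ucb_pulls K \<sigma> T m y eps a \<longleftrightarrow>
     {b\<in>{1..K}. \<forall>c\<in>{1..K}. ucb_index \<sigma> T m y eps c \<le> ucb_index \<sigma> T m y eps b} = {a}"

end

theory Submission
  imports Defs
begin

lemma cs_aux:
  fixes x :: "nat \<Rightarrow> real"
  assumes "n \<ge> 1"
  shows "real n * ((\<Sum>i<n. x i) / real n)^2 \<le> (\<Sum>i<n. (x i)^2)"
proof -
  define s where "s = (\<Sum>i<n. x i)"
  define mu where "mu = s / real n"
  have n0: "real n > 0" using assms by simp
  have "0 \<le> (\<Sum>i<n. (x i - mu)^2)" by (simp add: sum_nonneg)
  also have "\<dots> = (\<Sum>i<n. (x i)^2) - 2 * mu * s + real n * mu^2"
    by (simp add: power2_diff sum.distrib sum_subtractf sum_distrib_left s_def mult_ac)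
  also have "2 * mu * s = 2 * (real n * mu^2)" using n0 by (simp add: mu_def power2_eq_square)
  finally show ?thesis by (simp add: s_def[symmetric] mu_def[symmetric])
qed

lemma idx_dec:
  "ucb_index \<sigma> T m y eps a = ucb_index \<sigma> T m y (\<lambda>_ _. 0) a + (\<Sum>i<m a. eps a i) / real (m a)"
  unfolding ucb_index_def poisoned_mean_def by (simp add: sum.distrib add_divide_distrib)

theorem theorem2:
  fixes K astar T :: nat and \<sigma> \<xi> :: real
    and m :: "nat \<Rightarrow> nat" and y :: "nat \<Rightarrow> nat \<Rightarrow> real"
  assumes "astar \<in> {1..K}" and "T \<ge> 1" and "\<sigma> > 0" and "\<xi> > 0"
    and "\<forall>a\<in>{1..K}. m a \<ge> 1"
  shows "(\<forall>a\<in>{1..K}. \<exists>c. \<forall>eps. ucb_index \<sigma> T m y eps a = c + (\<Sum>i<m a. eps a i) / real (m a))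
         \<and> (\<exists>eps. P2_optimal K astar \<sigma> T \<xi> m y eps)
         \<and> (\<forall>eps. P2_optimal K astar \<sigma> T \<xi> m y eps \<longrightarrow> ucb_pulls K \<sigma> T m y eps astar)"
proof (intro conjI)
  define c where "c a = ucb_index \<sigma> T m y (\<lambda>_ _. 0) a" for a
  have dec: "\<And>eps a. ucb_index \<sigma> T m y eps a = c a + (\<Sum>i<m a. eps a i) / real (m a)"
    unfolding c_def by (rule idx_dec)
  show "\<forall>a\<in>{1..K}. \<exists>c. \<forall>eps. ucb_index \<sigma> T m y eps a = c + (\<Sum>i<m a. eps a i) / real (m a)"
    using dec by blast
  show "\<forall>eps. P2_optimal K astar \<sigma> T \<xi> m y eps \<longrightarrow> ucb_pulls K \<sigma> T m y eps astar"
  proof (intro allI impI)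
    fix eps assume "P2_optimal K astar \<sigma> T \<xi> m y eps"
    then have F: "\<forall>a\<in>{1..K}. a \<noteq> astar \<longrightarrow> ucb_index \<sigma> T m y eps astar \<ge> ucb_index \<sigma> T m y eps a + \<xi>"
      unfolding P2_optimal_def P2_feasible_def by blast
    show "ucb_pulls K \<sigma> T m y eps astar"
      unfolding ucb_pulls_def
    proof (rule set_eqI, rule iffI)
      fix b assume "b \<in> {b\<in>{1..K}. \<forall>c\<in>{1..K}. ucb_index \<sigma> T m y eps c \<le> ucb_index \<sigma> T m y eps b}"
      then show "b \<in> {astar}" using F assms(1,4)
        by (smt (verit, best) mem_Collect_eq singleton_iff)
    next
      fix b assume "b \<in> {astar}"
      then show "b \<in> {b\<in>{1..K}. \<forall>c\<in>{1..K}. ucb_index \<sigma> T m y eps c \<le> ucb_index \<sigma> T m y eps b}"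
        using F assms(1,4) by (smt (verit, best) mem_Collect_eq singleton_iff)
    qed
  qed
  define A where "A = {1..K} - {astar}"
  have finA: "finite A" unfolding A_def by simp
  define h where "h t a = max 0 (c a + \<xi> - c astar - t)" for t a
  define g where "g t = real (m astar) * t^2 + (\<Sum>a\<in>A. real (m a) * (h t a)^2)" for t
  define B where "B = (\<Sum>a\<in>A. \<bar>c a + \<xi> - c astar\<bar>)"
  have B0: "B \<ge> 0" unfolding B_def by (simp add: sum_nonneg)
  have Bge: "c a + \<xi> - c astar \<le> B" if "a \<in> A" for a
  proof -
    have "\<bar>c a + \<xi> - c astar\<bar> \<le> B" unfolding B_def
      using member_le_sum[of a A "\<lambda>a. \<bar>c a + \<xi> - c astar\<bar>"] finA that by simp
    then show ?thesis by simp
  qed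
  have cont: "continuous_on {0..B} g" unfolding g_def h_def by (intro continuous_intros)
  obtain t0 where t0: "t0 \<in> {0..B}" "\<forall>t\<in>{0..B}. g t0 \<le> g t"
    using continuous_attains_inf[OF compact_Icc _ cont] B0 by auto
  have glob: "g t0 \<le> g t" for t
  proof (cases "t < 0")
    case True
    have "h 0 a ^ 2 \<le> h t a ^ 2" for a
      using True by (intro power_mono) (auto simp: h_def)
    then have "g 0 \<le> g t" unfolding g_def
      by (intro add_mono sum_mono mult_left_mono) auto
    moreover have "g t0 \<le> g 0" using t0 B0 by auto
    ultimately show ?thesis by linarith
  next
    case False
    show ?thesis
    proof (cases "t \<le> B")
      case True then show ?thesis using t0 False by auto
    next
      case F2: False
      have "h t a = h B a" if "a \<in> A" for a using Bge[OF that] F2 by (simp add: h_def)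
      then have "(\<Sum>a\<in>A. real (m a) * (h t a)^2) = (\<Sum>a\<in>A. real (m a) * (h B a)^2)"
        by (intro sum.cong) auto
      moreover have "B^2 \<le> t^2" using F2 B0 by (intro power_mono) auto
      ultimately have "g B \<le> g t" unfolding g_def by (simp add: mult_left_mono)
      moreover have "g t0 \<le> g B" using t0 B0 by auto
      ultimately show ?thesis by linarith
    qed
  qed
  have mpos: "real (m a) \<ge> 1" if "a \<in> {1..K}" for a using assms(5) that by simp
  define d where "d a = (if a = astar then t0 else - h t0 a)" for a
  define eps where "eps a i = d a" for a i :: nat
  have idx: "ucb_index \<sigma> T m y eps a = c a + d a" if "a \<in> {1..K}" for a
    using mpos[OF that] by (simp add: dec eps_def)
  have feas: "P2_feasible K astar \<sigma> T \<xi> m y eps"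
    unfolding P2_feasible_def
  proof (intro ballI impI)
    fix a assume a: "a \<in> {1..K}" "a \<noteq> astar"
    show "ucb_index \<sigma> T m y eps a + \<xi> \<le> ucb_index \<sigma> T m y eps astar"
      using idx[OF a(1)] idx[OF assms(1)] a(2) by (simp add: d_def h_def)
  qed
  have split: "(\<Sum>a\<in>{1..K}. f a) = f astar + (\<Sum>a\<in>A. f a)" for f :: "nat \<Rightarrow> real"
    unfolding A_def using assms(1) by (simp add: sum.remove)
  have cost: "attack_cost K m eps = g t0"
  proof -
    have "attack_cost K m eps = (\<Sum>a\<in>{1..K}. real (m a) * (d a)^2)"
      unfolding attack_cost_def eps_def by simp
    also have "\<dots> = g t0" unfolding split g_def
      by (simp add: d_def A_def)
    finally show ?thesis .
  qed
  have opt: "attack_cost K m eps \<le> attack_cost K m eps'"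
    if F: "P2_feasible K astar \<sigma> T \<xi> m y eps'" for eps'
  proof -
    define d' where "d' a = (\<Sum>i<m a. eps' a i) / real (m a)" for a
    define t where "t = d' astar"
    have "(\<Sum>a\<in>{1..K}. real (m a) * (d' a)^2) \<le> attack_cost K m eps'"
      unfolding attack_cost_def d'_def
      by (intro sum_mono cs_aux) (use assms(5) in auto)
    moreover have "h t a ^ 2 \<le> (d' a)^2" if "a \<in> A" for a
    proof -
      have a: "a \<in> {1..K}" "a \<noteq> astar" using that A_def by auto
      have "c a + d' a + \<xi> \<le> c astar + t"
        using F a unfolding P2_feasible_def t_def d'_def dec by auto
      then have "h t a \<le> \<bar>d' a\<bar>" by (simp add: h_def)
      then show ?thesis using power_mono[of "h t a" "\<bar>d' a\<bar>" 2] by (simp add: h_def)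
    qed
    then have "g t \<le> (\<Sum>a\<in>{1..K}. real (m a) * (d' a)^2)"
      unfolding split g_def t_def by (intro add_left_mono sum_mono mult_left_mono) auto
    ultimately show ?thesis using cost glob[of t] by linarith
  qed
  show "\<exists>eps. P2_optimal K astar \<sigma> T \<xi> m y eps"
    unfolding P2_optimal_def using feas opt by blast
qed

end
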